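(* Let $f,f':\mathcal D_n^+\to\mathcal D_n^+$ be stable mappings (indexed by $n$) with fixed points $\Delta,\Delta'\in\mathcal D_n^+$, $\Delta=f(\Delta)$ and $\Delta'=f'(\Delta')$. Assume $\Delta'\sim O(1)$, that $f$ is contracting for the stable semi-metric around $\Delta'$ with parameter $\lambda<1$ (i.e. $d_s(f(\Delta''),f(\Delta'))\le\lambda\,d_s(\Delta'',\Delta')$ for all $\Delta''\in\mathcal D_n^+$), and that $$1-\lambda-\left\|\sqrt{\frac{|f(\Delta')-f'(\Delta')|}{\Delta'}}\right\|\ge O(1).$$ Then there exists a constant $K\le O(1)$ such that $\|\Delta-\Delta'\|\le K\,\|f(\Delta')-f'(\Delta')\|$.
   Context: All objects are indexed by $n$; $a\le O(b)$ means $a_n\le Kb_n$ for some $K$ independent of $n$, $a\ge O(b)$ means $a_n\ge\kappa b_n$ for some $\kappa>0$ independent of $n$. For $\Delta\in\mathcal D_n^+$ (diagonal $n\times n$ matrices with positive diagonal entries), $\Delta\sim O(1)$ means $\|\Delta\|\le O(1)$ and $\|\Delta^{-1}\|\le O(1)$; $\|\cdot\|$ is the spectral norm, operations on diagonal matrices are entrywise. $d_s(\Delta,\Delta')=\max_i\frac{|\Delta_i-\Delta'_i|}{\sqrt{\Delta_i\Delta'_i}}$; $f$ is stable if $d_s(f(\Delta),f(\Delta'))\le d_s(\Delta,\Delta')$ for all $\Delta,\Delta'$. *)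

theory Defs
  imports Complex_Main
begin

text \<open>A positive diagonal n x n matrix is represented by its diagonal,
  a function nat => real, positive on indices i < n and zero elsewhere.\<close>
definition pos_diag :: "nat \<Rightarrow> (nat \<Rightarrow> real) set" where
  "pos_diag n = {x. (\<forall>i<n. 0 < x i) \<and> (\<forall>i\<ge>n. x i = 0)}"

text \<open>Spectral norm of a diagonal matrix = max absolute diagonal entry.\<close>
definition dnorm :: "nat \<Rightarrow> (nat \<Rightarrow> real) \<Rightarrow> real" where
  "dnorm n x = Max (insert 0 {\<bar>x i\<bar> | i. i < n})"

definition ds :: "nat \<Rightarrow> (nat \<Rightarrow> real) \<Rightarrow> (nat \<Rightarrow> real) \<Rightarrow> real" where
  "ds n a b = Max (insert 0 {\<bar>a i - b i\<bar> / sqrt (a i * b i) | i. i < n})"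

definition stable_map :: "nat \<Rightarrow> ((nat \<Rightarrow> real) \<Rightarrow> (nat \<Rightarrow> real)) \<Rightarrow> bool" where
  "stable_map n f \<longleftrightarrow> (\<forall>x\<in>pos_diag n. f x \<in> pos_diag n) \<and>
     (\<forall>x\<in>pos_diag n. \<forall>y\<in>pos_diag n. ds n (f x) (f y) \<le> ds n x y)"

end

theory Submission
  imports Defs
begin
lemma key: fixes x y z :: real assumes "x>0" "y>0" "z>0"
 shows "\<bar>x^2-z^2\<bar>/(x*z) \<le> \<bar>x^2-y^2\<bar>/(x*y) + \<bar>y^2-z^2\<bar>/(y*z) + (\<bar>x^2-y^2\<bar>/(x*y)) * (\<bar>y^2-z^2\<bar>/(y*z))"
proof -
  have e: "x/z - z/x = ((x/y - y/x)*(y/z+z/y) + (x/y+y/x)*(y/z - z/y))/2"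
    using assms by (simp add: field_simps) 
  have p1: "\<bar>x/y - y/x\<bar> = \<bar>x^2-y^2\<bar>/(x*y)" using assms
    by (simp add: field_simps power2_eq_square abs_div)
  have p2: "\<bar>y/z - z/y\<bar> = \<bar>y^2-z^2\<bar>/(y*z)" using assms
    by (simp add: field_simps power2_eq_square abs_div)
  have p3: "\<bar>x/z - z/x\<bar> = \<bar>x^2-z^2\<bar>/(x*z)" using assms
    by (simp add: field_simps power2_eq_square abs_div)
  have s1: "x/y+y/x \<le> 2 + \<bar>x/y - y/x\<bar>"
  proof -
    have "x/y+y/x = 2 + (x-y)^2/(x*y)" using assms by (simp add: field_simps power2_eq_square)
    moreover have "(x-y)^2 \<le> \<bar>x^2-y^2\<bar>" using assms
      by (smt (verit) abs_square_eq_1 power2_eq_square mult_right_mono abs_mult left_diff_distrib right_diff_distrib)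
    ultimately show ?thesis using assms p1
      by (simp add: divide_right_mono)
  qed
  have s2: "y/z+z/y \<le> 2 + \<bar>y/z - z/y\<bar>"
  proof -
    have "y/z+z/y = 2 + (y-z)^2/(y*z)" using assms by (simp add: field_simps power2_eq_square)
    moreover have "(y-z)^2 \<le> \<bar>y^2-z^2\<bar>" using assms
      by (smt (verit) abs_square_eq_1 power2_eq_square mult_right_mono abs_mult left_diff_distrib right_diff_distrib)
    ultimately show ?thesis using assms p2
      by (simp add: divide_right_mono)
  qed
  define P where "P = \<bar>x/y - y/x\<bar>"
  define Q where "Q = \<bar>y/z - z/y\<bar>"
  have pos1: "x/y+y/x \<ge> 0" "y/z+z/y \<ge> 0" using assms by auto
  have "\<bar>x/z - z/x\<bar> \<le> (\<bar>x/y - y/x\<bar>*(y/z+z/y) + (x/y+y/x)*\<bar>y/z - z/y\<bar>)/2"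
    unfolding e using pos1 by (simp add: abs_mult abs_triangle_ineq [THEN order_trans] )
  also have "\<dots> \<le> (P*(2+Q) + (2+P)*Q)/2" unfolding P_def Q_def
    by (intro divide_right_mono add_mono mult_mono s1 s2) (use s1 s2 pos1 in auto)
  also have "\<dots> = P + Q + P*Q" by (simp add: algebra_simps)
  finally show ?thesis using p1 p2 p3 P_def Q_def by simp
qed
lemma key2: fixes a b c :: real assumes "a>0" "b>0" "c>0"
  shows "\<bar>a-c\<bar>/sqrt(a*c) \<le> \<bar>a-b\<bar>/sqrt(a*b) + \<bar>b-c\<bar>/sqrt(b*c) + (\<bar>a-b\<bar>/sqrt(a*b)) * (\<bar>b-c\<bar>/sqrt(b*c))"
  using key[of "sqrt a" "sqrt b" "sqrt c"] assms by (simp add: real_sqrt_mult)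

lemma dn_ge: "i < n \<Longrightarrow> \<bar>x i\<bar> \<le> dnorm n x"
  unfolding dnorm_def by (rule Max_ge) (auto simp: setcompr_eq_image)
lemma dn_nonneg: "0 \<le> dnorm n x"
  unfolding dnorm_def by (rule Max_ge) (auto simp: setcompr_eq_image)
lemma dn_le: "0 \<le> M \<Longrightarrow> (\<And>i. i < n \<Longrightarrow> \<bar>x i\<bar> \<le> M) \<Longrightarrow> dnorm n x \<le> M"
  unfolding dnorm_def by (subst Max_le_iff) (auto simp: setcompr_eq_image)
lemma ds_ge: "i < n \<Longrightarrow> \<bar>a i - b i\<bar> / sqrt (a i * b i) \<le> ds n a b"
  unfolding ds_def by (rule Max_ge) (auto simp: setcompr_eq_image)
lemma ds_nonneg: "0 \<le> ds n a b"
  unfolding ds_def by (rule Max_ge) (auto simp: setcompr_eq_image)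
lemma ds_le: "0 \<le> M \<Longrightarrow> (\<And>i. i < n \<Longrightarrow> \<bar>a i - b i\<bar> / sqrt (a i * b i) \<le> M) \<Longrightarrow> ds n a b \<le> M"
  unfolding ds_def by (subst Max_le_iff) (auto simp: setcompr_eq_image)

lemma lam_nonneg:
  assumes n: "n \<ge> 1" and c: "c \<in> pos_diag n"
    and fmap: "\<forall>x\<in>pos_diag n. f x \<in> pos_diag n"
    and contr: "\<forall>D\<in>pos_diag n. ds n (f D) (f c) \<le> lam * ds n D c"
  shows "0 \<le> lam"
proof -
  define D where "D = (\<lambda>i. 2 * c i)"
  have Dp: "D \<in> pos_diag n" using c unfolding D_def pos_diag_def by auto
  have c0: "c 0 > 0" using c n unfolding pos_diag_def by auto
  have "\<bar>D 0 - c 0\<bar> / sqrt (D 0 * c 0) > 0" using c0 unfolding D_def by simp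
  also have "\<dots> \<le> ds n D c" using n by (intro ds_ge) auto
  finally have pos: "ds n D c > 0" .
  have "0 \<le> lam * ds n D c" using contr Dp ds_nonneg[of n "f D" "f c"] by force
  with pos show ?thesis by (simp add: zero_le_mult_iff)
qed

lemma main_n:
  fixes a b c :: "nat \<Rightarrow> real"
  assumes a: "a \<in> pos_diag n" and b: "b \<in> pos_diag n" and c: "c \<in> pos_diag n"
    and lam0: "0 \<le> lam"
    and con: "ds n a b \<le> lam * ds n a c"
    and C1: "dnorm n c \<le> C" and C2: "dnorm n (\<lambda>i. 1 / c i) \<le> C"
    and kap: "\<kappa> > 0"
    and gap: "1 - lam - dnorm n (\<lambda>i. sqrt (\<bar>b i - c i\<bar> / c i)) \<ge> \<kappa>"
  shows "dnorm n (\<lambda>i. a i - c i) \<le> (C^2 * (C^2/\<kappa>^2 + 1) / \<kappa>^2) * dnorm n (\<lambda>i. b i - c i)"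
proof -
  define E where "E = dnorm n (\<lambda>i. sqrt (\<bar>b i - c i\<bar> / c i))"
  define M where "M = dnorm n (\<lambda>i. b i - c i)"
  define D where "D = ds n a c"
  have E0: "0 \<le> E" unfolding E_def by (rule dn_nonneg)
  have M0: "0 \<le> M" unfolding M_def by (rule dn_nonneg)
  have D0: "0 \<le> D" unfolding D_def by (rule ds_nonneg)
  have C0: "0 \<le> C" using C1 dn_nonneg order_trans by blast
  have Elt: "E \<le> 1 - \<kappa> - lam" using gap E_def by simp
  have kap1: "\<kappa> \<le> 1" using Elt E0 lam0 by simp
  have apos: "\<And>i. i < n \<Longrightarrow> a i > 0" using a unfolding pos_diag_def by auto
  have bpos: "\<And>i. i < n \<Longrightarrow> b i > 0" using b unfolding pos_diag_def by auto
  have cpos: "\<And>i. i < n \<Longrightarrow> c i > 0" using c unfolding pos_diag_def by auto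
  have cC: "\<And>i. i < n \<Longrightarrow> c i \<le> C" using dn_ge[of _ n c] C1 cpos by force
  have icC: "\<And>i. i < n \<Longrightarrow> 1 / c i \<le> C" using dn_ge[of _ n "\<lambda>i. 1 / c i"] C2 cpos by force
  have bcE: "\<bar>b i - c i\<bar> \<le> E^2 * c i" if i: "i < n" for i
  proof -
    have "sqrt (\<bar>b i - c i\<bar> / c i) \<le> E" using dn_ge[OF i, of "\<lambda>i. sqrt (\<bar>b i - c i\<bar> / c i)"] E_def by simp
    hence "\<bar>b i - c i\<bar> / c i \<le> E^2" using E0 by (metis abs_ge_zero divide_nonneg_nonneg less_imp_le cpos[OF i] real_sqrt_le_iff real_sqrt_pow2 power2_eq_square real_sqrt_mult_self sqrt_le_D)
    thus ?thesis using cpos[OF i] by (simp add: divide_le_eq)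
  qed
  have bcM: "\<And>i. i < n \<Longrightarrow> \<bar>b i - c i\<bar> \<le> M" unfolding M_def by (rule dn_ge)
  have sq: "sqrt (b i * c i) \<ge> c i * (1 - E)" if i: "i < n" for i
  proof -
    have "b i \<ge> c i * (1 - E^2)" using bcE[OF i] by (simp add: algebra_simps abs_le_iff)
    moreover have "1 - E^2 \<ge> (1-E)^2" proof -
      have "E \<le> 1" using E0 Elt kap lam0 by simp
      hence "E * E \<le> E" using E0 by (simp add: mult_left_le)
      thus ?thesis by (simp add: power2_eq_square algebra_simps)
    qed
    ultimately have "b i \<ge> c i * (1-E)^2" using cpos[OF i]
      by (meson mult_left_mono less_imp_le order_trans)
    hence "b i * c i \<ge> c i * (1-E)^2 * c i" using cpos[OF i]
      by (simp add: mult_right_mono)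
    hence "b i * c i \<ge> (c i * (1 - E))^2" by (simp add: power2_eq_square algebra_simps)
    thus ?thesis by (metis real_le_rsqrt)
  qed
  define Q where "Q = (\<lambda>i. \<bar>b i - c i\<bar> / sqrt (b i * c i))"
  have Q0: "\<And>i. i < n \<Longrightarrow> Q i \<ge> 0" unfolding Q_def using bpos cpos by (simp add: less_imp_le)
  have QE: "lam * Q i \<le> E" if i: "i < n" for i
  proof -
    have oe: "1 - E \<ge> \<kappa>" using Elt lam0 by simp
    have "(1 - E) * Q i \<le> \<bar>b i - c i\<bar> / c i"
    proof -
      have "(1 - E) * Q i = \<bar>b i - c i\<bar> * (1 - E) / sqrt (b i * c i)" unfolding Q_def by simp
      also have "\<dots> \<le> \<bar>b i - c i\<bar> * (1 - E) / (c i * (1 - E))"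
        using sq[OF i] oe kap cpos[OF i] bpos[OF i] by (intro divide_left_mono) auto
      also have "\<dots> = \<bar>b i - c i\<bar> / c i" using oe kap by simp
      finally show ?thesis .
    qed
    also have "\<dots> \<le> E^2" using bcE[OF i] cpos[OF i] by (simp add: divide_le_eq)
    also have "\<dots> \<le> E" proof -
      have "E \<le> 1" using E0 Elt kap lam0 by simp
      thus ?thesis using E0 by (simp add: power2_eq_square mult_left_le)
    qed
    finally have "(1 - E) * Q i \<le> E" .
    moreover have "lam * Q i \<le> (1 - E) * Q i" using Elt kap Q0[OF i] by (intro mult_right_mono) auto
    ultimately show ?thesis by simp
  qed
  have QM: "Q i \<le> M * C / \<kappa>" if i: "i < n" for i
  proof -
    have "Q i \<le> M / (c i * \<kappa>)" unfolding Q_def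
      using sq[OF i] bcM[OF i] cpos[OF i] kap Elt lam0
      by (intro frac_le) (auto intro: order_trans[OF mult_left_mono[of \<kappa> "1-E"]])
    also have "\<dots> = M * (1 / c i) / \<kappa>" by simp
    also have "\<dots> \<le> M * C / \<kappa>" using icC[OF i] M0 kap by (intro divide_right_mono mult_left_mono) auto
    finally show ?thesis .
  qed
  have step: "D \<le> (lam + E) * D + M * C / \<kappa>"
    unfolding D_def
  proof (rule ds_le)
    show "0 \<le> (lam + E) * ds n a c + M * C / \<kappa>" using lam0 E0 ds_nonneg M0 C0 kap by simp
    fix i assume i: "i < n"
    have P: "\<bar>a i - b i\<bar> / sqrt (a i * b i) \<le> lam * D" using ds_ge[OF i, of a b] con D_def by simp
    have "\<bar>a i - c i\<bar> / sqrt (a i * c i) \<le> \<bar>a i - b i\<bar> / sqrt (a i * b i) + Q i + (\<bar>a i - b i\<bar> / sqrt (a i * b i)) * Q i"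
      unfolding Q_def by (rule key2) (use apos bpos cpos i in auto)
    also have "\<dots> \<le> lam * D + Q i + (lam * D) * Q i"
      using P Q0[OF i] by (intro add_mono mult_right_mono) auto
    also have "\<dots> = lam * D + Q i + D * (lam * Q i)" by simp
    also have "\<dots> \<le> lam * D + M * C / \<kappa> + D * E"
      using QM[OF i] QE[OF i] D0 lam0 by (intro add_mono mult_left_mono) auto
    finally show "\<bar>a i - c i\<bar> / sqrt (a i * c i) \<le> (lam + E) * ds n a c + M * C / \<kappa>"
      by (simp add: D_def algebra_simps)
  qed
  have "\<kappa> * D \<le> (1 - lam - E) * D" using Elt D0 by (intro mult_right_mono) auto
  also have "\<dots> \<le> M * C / \<kappa>" using step by (simp add: algebra_simps)
  finally have DM: "D \<le> M * C / \<kappa>^2" using kap by (simp add: field_simps power2_eq_square)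
  have MC: "M \<le> C" unfolding M_def
  proof (rule dn_le[OF C0])
    fix i assume i: "i < n"
    have "E^2 \<le> 1" using E0 Elt kap lam0 by (simp add: power_le_one)
    hence "E^2 * c i \<le> c i" using cpos[OF i] by (simp add: mult_le_cancel_right1)
    thus "\<bar>b i - c i\<bar> \<le> C" using bcE[OF i] cC[OF i] by linarith
  qed
  define D1 where "D1 = C^2 / \<kappa>^2"
  have DD1: "D \<le> D1" unfolding D1_def
    using DM MC C0 kap by (smt (verit) divide_right_mono mult_right_mono power2_eq_square zero_le_power2)
  show ?thesis unfolding M_def[symmetric]
  proof (rule dn_le)
    show "0 \<le> C\<^sup>2 * (C\<^sup>2 / \<kappa>\<^sup>2 + 1) / \<kappa>\<^sup>2 * M" using M0 kap C0 by simp
    fix j assume j: "j < n"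
    define x where "x = sqrt (a j)"
    define z where "z = sqrt (c j)"
    have x0: "x > 0" and z0: "z > 0" using apos[OF j] cpos[OF j] x_def z_def by auto
    have dj: "\<bar>a j - c j\<bar> / sqrt (a j * c j) \<le> D" unfolding D_def by (rule ds_ge[OF j])
    have ac: "sqrt (a j * c j) = x * z" by (simp add: x_def z_def real_sqrt_mult)
    have xx: "a j = x^2" "c j = z^2" using apos[OF j] cpos[OF j] x_def z_def by simp_all
    have e1: "\<bar>a j - c j\<bar> \<le> D * (x * z)" using dj x0 z0 by (simp add: ac divide_le_eq)
    have xz: "x \<le> (D + 1) * z"
    proof (rule ccontr)
      assume "\<not> ?thesis"
      hence h: "x > (D+1) * z" by simp
      hence "x - D * z > z" by (simp add: algebra_simps)
      moreover have "x > z" proof -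
        have "D * z \<ge> 0" using D0 z0 by simp
        thus ?thesis using h by (simp add: algebra_simps)
      qed
      ultimately have "x * (x - D * z) > z * z" using z0 by (smt (verit) mult_strict_mono)
      moreover have "x^2 - z^2 \<le> D * (x * z)" using e1 xx by simp
      ultimately show False by (simp add: power2_eq_square algebra_simps)
    qed
    have "sqrt (a j * c j) \<le> (D1 + 1) * C"
    proof -
      have "x * z \<le> (D + 1) * z * z" using xz z0 by (simp add: mult_right_mono)
      also have "\<dots> = (D + 1) * c j" using xx by (simp add: power2_eq_square)
      also have "\<dots> \<le> (D1 + 1) * C" using DD1 cC[OF j] D0 cpos[OF j] by (intro mult_mono) auto
      finally show ?thesis using ac by simp
    qed
    have "\<bar>a j - c j\<bar> \<le> D * sqrt (a j * c j)" using e1 ac by simp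
    also have "\<dots> \<le> (M * C / \<kappa>^2) * ((D1 + 1) * C)"
      using DM \<open>sqrt (a j * c j) \<le> (D1 + 1) * C\<close> D0 apos[OF j] cpos[OF j] by (intro mult_mono) auto
    also have "\<dots> = C\<^sup>2 * (C\<^sup>2 / \<kappa>\<^sup>2 + 1) / \<kappa>\<^sup>2 * M" unfolding D1_def by (simp add: power2_eq_square)
    finally show "\<bar>a j - c j\<bar> \<le> C\<^sup>2 * (C\<^sup>2 / \<kappa>\<^sup>2 + 1) / \<kappa>\<^sup>2 * M" .
  qed
qed
theorem theorem6:
  fixes f f' :: "nat \<Rightarrow> (nat \<Rightarrow> real) \<Rightarrow> (nat \<Rightarrow> real)"
    and \<Delta> \<Delta>' :: "nat \<Rightarrow> nat \<Rightarrow> real"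
    and lam :: "nat \<Rightarrow> real"
  assumes stab: "\<forall>n\<ge>1. stable_map n (f n) \<and> stable_map n (f' n)"
    and fix1: "\<forall>n\<ge>1. \<Delta> n \<in> pos_diag n \<and> f n (\<Delta> n) = \<Delta> n"
    and fix2: "\<forall>n\<ge>1. \<Delta>' n \<in> pos_diag n \<and> f' n (\<Delta>' n) = \<Delta>' n"
    and bdd: "\<exists>C. \<forall>n\<ge>1. dnorm n (\<Delta>' n) \<le> C \<and> dnorm n (\<lambda>i. 1 / \<Delta>' n i) \<le> C"
    and lam_lt: "\<forall>n\<ge>1. lam n < 1"
    and contr: "\<forall>n\<ge>1. \<forall>D\<in>pos_diag n.
                  ds n (f n D) (f n (\<Delta>' n)) \<le> lam n * ds n D (\<Delta>' n)"
    and gap: "\<exists>\<kappa>>0. \<forall>n\<ge>1.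
       1 - lam n - dnorm n (\<lambda>i. sqrt (\<bar>f n (\<Delta>' n) i - f' n (\<Delta>' n) i\<bar> / \<Delta>' n i)) \<ge> \<kappa>"
  shows "\<exists>K :: nat \<Rightarrow> real. (\<exists>B. \<forall>n\<ge>1. K n \<le> B) \<and>
     (\<forall>n\<ge>1. dnorm n (\<lambda>i. \<Delta> n i - \<Delta>' n i)
               \<le> K n * dnorm n (\<lambda>i. f n (\<Delta>' n) i - f' n (\<Delta>' n) i))"
proof -
  obtain C where C: "\<forall>n\<ge>1. dnorm n (\<Delta>' n) \<le> C \<and> dnorm n (\<lambda>i. 1 / \<Delta>' n i) \<le> C" using bdd by blast
  obtain \<kappa> where kap: "\<kappa> > 0" and kg: "\<forall>n\<ge>1.
       1 - lam n - dnorm n (\<lambda>i. sqrt (\<bar>f n (\<Delta>' n) i - f' n (\<Delta>' n) i\<bar> / \<Delta>' n i)) \<ge> \<kappa>" using gap by blast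
  define K0 where "K0 = C^2 * (C^2/\<kappa>^2 + 1) / \<kappa>^2"
  show ?thesis
  proof (intro exI[of _ "\<lambda>n. K0"] conjI allI impI)
    show "\<exists>B. \<forall>n\<ge>1. K0 \<le> B" by blast
    fix n :: nat assume n: "n \<ge> 1"
    have fm: "\<forall>x\<in>pos_diag n. f n x \<in> pos_diag n" using stab n unfolding stable_map_def by blast
    have cp: "\<Delta>' n \<in> pos_diag n" and ff: "f' n (\<Delta>' n) = \<Delta>' n" using fix2 n by auto
    have ap: "\<Delta> n \<in> pos_diag n" and fa: "f n (\<Delta> n) = \<Delta> n" using fix1 n by auto
    have l0: "0 \<le> lam n" using lam_nonneg[OF n cp fm] contr n by blast
    have con: "ds n (\<Delta> n) (f n (\<Delta>' n)) \<le> lam n * ds n (\<Delta> n) (\<Delta>' n)"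
      using contr n ap fa by force
    have "dnorm n (\<lambda>i. \<Delta> n i - \<Delta>' n i) \<le> K0 * dnorm n (\<lambda>i. f n (\<Delta>' n) i - \<Delta>' n i)"
      unfolding K0_def
      by (rule main_n[OF ap fm[rule_format, OF cp] cp l0 con _ _ kap])
         (use C n kg ff in auto)
    thus "dnorm n (\<lambda>i. \<Delta> n i - \<Delta>' n i)
               \<le> K0 * dnorm n (\<lambda>i. f n (\<Delta>' n) i - f' n (\<Delta>' n) i)" using ff by simp
  qed
qed

end
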